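(* For the conditions (i)–(v) of the context, (i) $\Longleftrightarrow$ (ii) $\Longrightarrow$ (iii) $\Longrightarrow$ (iv) $\Longrightarrow$ (v).
   Context: $X$ is a finite-dimensional real Hilbert space with norm $\|\cdot\|$, $T:X\rightrightarrows X$ is a maximal monotone operator, $\Omega:=T^{-1}(0)$, $\mathbb{B}$ is the closed unit ball, $\mathbb{B}(z;r)$ the closed ball of radius $r$ about $z$, $\operatorname{dist}(0,\emptyset)=+\infty$. Conditions: (i) there exist $r>0,\kappa_r>0$ with $\operatorname{dist}(z,\Omega)\le\kappa_r\|w\|$ for all $w\in\mathbb{B}(0;r)$ and $z\in T^{-1}(w)$; (ii) there exist $r>0,\kappa_r>0$ with $T^{-1}(w)\subset T^{-1}(0)+\kappa_r\|w\|\mathbb{B}$ for all $w\in\mathbb{B}(0;r)$; (iii) for every $r>0$ there exists $\kappa_r>0$ with $\operatorname{dist}(z,\Omega)\le\kappa_r\operatorname{dist}(0,T(z))$ for all $z$ with $\operatorname{dist}(z,\Omega)\le r$; (iv) for every $r>0$ there exists $\kappa_r>0$ with $\operatorname{dist}(z,\Omega)\le\kappa_r\operatorname{dist}(0,T(z))$ for all $z$ with $\|z\|\le r$; (v) there exist $\bar z\in\Omega$, $r>0$, $\kappa_r>0$ with $\operatorname{dist}(z,\Omega)\le\kappa_r\operatorname{dist}(0,T(z))$ for all $z\in\mathbb{B}(\bar z;r)$. *)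

theory Defs
  imports "HOL-Analysis.Analysis" "HOL-Library.Extended_Real"
begin

definition monotone_op :: "('a::real_inner \<Rightarrow> 'a set) \<Rightarrow> bool" where
  "monotone_op T \<longleftrightarrow>
     (\<forall>x y u v. u \<in> T x \<longrightarrow> v \<in> T y \<longrightarrow> 0 \<le> inner (x - y) (u - v))"

definition maximal_monotone :: "('a::real_inner \<Rightarrow> 'a set) \<Rightarrow> bool" where
  "maximal_monotone T \<longleftrightarrow>
     monotone_op T \<and> (\<forall>S. monotone_op S \<and> (\<forall>x. T x \<subseteq> S x) \<longrightarrow> S = T)"

definition dist_set :: "'a::metric_space \<Rightarrow> 'a set \<Rightarrow> ereal" where
  "dist_set x S = (if S = {} then \<infinity> else ereal (infdist x S))"

definition inv_op :: "('a \<Rightarrow> 'a set) \<Rightarrow> 'a \<Rightarrow> 'a set" where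
  "inv_op T w = {z. w \<in> T z}"

end

theory Submission
  imports Defs
begin

lemma key_aux:
  fixes T :: "'a::euclidean_space \<Rightarrow> 'a set"
  assumes "\<Omega> \<noteq> {}" "\<kappa> > 0" "\<forall>w\<in>T z. infdist z \<Omega> \<le> \<kappa> * norm w"
  shows "dist_set z \<Omega> \<le> ereal \<kappa> * dist_set 0 (T z)"
proof (cases "T z = {}")
  case True
  then show ?thesis using assms by (simp add: dist_set_def)
next
  case False
  have "infdist z \<Omega> / \<kappa> \<le> infdist 0 (T z)"
  proof -
    have "infdist 0 (T z) = (INF w\<in>T z. dist 0 w)" using False by (simp add: infdist_def)
    moreover have "infdist z \<Omega> / \<kappa> \<le> (INF w\<in>T z. dist 0 w)"
    proof (rule cINF_greatest[OF False])
      fix w assume "w \<in> T z"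
      then have "infdist z \<Omega> \<le> \<kappa> * norm w" using assms(3) by blast
      then show "infdist z \<Omega> / \<kappa> \<le> dist 0 w" using assms(2)
        by (simp add: pos_divide_le_eq mult.commute)
    qed
    ultimately show ?thesis by simp
  qed
  then have "infdist z \<Omega> \<le> \<kappa> * infdist 0 (T z)"
    using assms(2) by (simp add: pos_divide_le_eq mult.commute)
  then show ?thesis using False assms(1) by (simp add: dist_set_def)
qed

theorem lemma1:
  fixes T :: "'a::euclidean_space \<Rightarrow> 'a set"
  assumes "maximal_monotone T"
    and "inv_op T 0 \<noteq> {}"
  defines "\<Omega> \<equiv> inv_op T 0"
  defines "c1 \<equiv> (\<exists>r>0. \<exists>\<kappa>>0. \<forall>w \<in> cball 0 r. \<forall>z \<in> inv_op T w.
                    dist_set z \<Omega> \<le> ereal (\<kappa> * norm w))"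
    and "c2 \<equiv> (\<exists>r>0. \<exists>\<kappa>>0. \<forall>w \<in> cball 0 r.
                    inv_op T w \<subseteq> {x + y | x y. x \<in> inv_op T 0 \<and> y \<in> cball 0 (\<kappa> * norm w)})"
    and "c3 \<equiv> (\<forall>r>0. \<exists>\<kappa>>0. \<forall>z. dist_set z \<Omega> \<le> ereal r \<longrightarrow>
                    dist_set z \<Omega> \<le> ereal \<kappa> * dist_set 0 (T z))"
    and "c4 \<equiv> (\<forall>r>0. \<exists>\<kappa>>0. \<forall>z. norm z \<le> r \<longrightarrow>
                    dist_set z \<Omega> \<le> ereal \<kappa> * dist_set 0 (T z))"
    and "c5 \<equiv> (\<exists>zb \<in> \<Omega>. \<exists>r>0. \<exists>\<kappa>>0. \<forall>z \<in> cball zb r.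
                    dist_set z \<Omega> \<le> ereal \<kappa> * dist_set 0 (T z))"
  shows "(c1 \<longleftrightarrow> c2) \<and> (c2 \<longrightarrow> c3) \<and> (c3 \<longrightarrow> c4) \<and> (c4 \<longrightarrow> c5)"
proof -
  have ne: "\<Omega> \<noteq> {}" using assms(2) by (simp add: \<Omega>_def)
  have ds: "dist_set z \<Omega> = ereal (infdist z \<Omega>)" for z using ne by (simp add: dist_set_def)
  have 12: "c2" if "c1"
  proof -
    from that obtain r \<kappa> where r: "r > 0" "\<kappa> > 0" and
      h: "\<forall>w \<in> cball 0 r. \<forall>z \<in> inv_op T w. infdist z \<Omega> \<le> \<kappa> * norm w"
      unfolding c1_def ds by auto
    have "inv_op T w \<subseteq> {x + y | x y. x \<in> inv_op T 0 \<and> y \<in> cball 0 (2*\<kappa> * norm w)}"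
      if w: "w \<in> cball 0 r" for w
    proof
      fix z assume z: "z \<in> inv_op T w"
      show "z \<in> {x + y | x y. x \<in> inv_op T 0 \<and> y \<in> cball 0 (2*\<kappa> * norm w)}"
      proof (cases "w = 0")
        case True
        then show ?thesis using z by (auto intro!: exI[of _ z])
      next
        case False
        have "infdist z \<Omega> < 2*\<kappa> * norm w" using h w z r False
        proof -
          have "norm w > 0" using False by simp
          then have "\<kappa> * norm w < 2*\<kappa> * norm w" using r by simp
          moreover have "infdist z \<Omega> \<le> \<kappa> * norm w" using h w z by blast
          ultimately show ?thesis by linarith
        qed
        then obtain a where a: "a \<in> \<Omega>" "dist z a < 2*\<kappa> * norm w"
          using cInf_lessD[of "dist z ` \<Omega>"] ne by (auto simp: infdist_notempty)
        have "z = a + (z - a)" "a \<in> inv_op T 0" "z - a \<in> cball 0 (2*\<kappa> * norm w)"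
          using a unfolding \<Omega>_def by (auto simp: dist_norm norm_minus_commute)
        then show ?thesis by blast
      qed
    qed
    then show ?thesis unfolding c2_def using r
      by (intro exI[of _ r] conjI exI[of _ "2*\<kappa>"]) auto
  qed
  have 21: "c1" if "c2"
  proof -
    from that obtain r \<kappa> where r: "r > 0" "\<kappa> > 0" and
      h: "\<forall>w \<in> cball 0 r. inv_op T w \<subseteq> {x + y | x y. x \<in> inv_op T 0 \<and> y \<in> cball 0 (\<kappa> * norm w)}"
      unfolding c2_def by auto
    have "infdist z \<Omega> \<le> \<kappa> * norm w" if wz: "w \<in> cball 0 r" "z \<in> inv_op T w" for w z
    proof -
      obtain x y where xy: "z = x + y" "x \<in> \<Omega>" "norm y \<le> \<kappa> * norm w"
      proof -
        have "z \<in> {x + y | x y. x \<in> inv_op T 0 \<and> y \<in> cball 0 (\<kappa> * norm w)}"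
          using h wz by blast
        then show ?thesis using that unfolding \<Omega>_def by auto
      qed
      have "infdist z \<Omega> \<le> dist z x" using infdist_le xy(2) by blast
      also have "\<dots> = norm y" using xy by (simp add: dist_norm)
      finally show ?thesis using xy by simp
    qed
    then show ?thesis unfolding c1_def ds using r by (intro exI[of _ r] conjI exI[of _ \<kappa>]) auto
  qed
  have 23: "c3" if "c2"
  proof -
    from that obtain r0 \<kappa>0 where r: "r0 > 0" "\<kappa>0 > 0" and
      h: "\<forall>w \<in> cball 0 r0. \<forall>z \<in> inv_op T w. infdist z \<Omega> \<le> \<kappa>0 * norm w"
      using 21 unfolding c1_def ds by auto
    show ?thesis unfolding c3_def
    proof (intro allI impI)
      fix r :: real assume "r > 0"
      define \<kappa> where "\<kappa> = max \<kappa>0 (r / r0)"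
      have kp: "\<kappa> > 0" using r by (simp add: \<kappa>_def)
      have "dist_set z \<Omega> \<le> ereal \<kappa> * dist_set 0 (T z)" if zr: "dist_set z \<Omega> \<le> ereal r" for z
      proof (rule key_aux[OF ne kp], intro ballI)
        fix w assume w: "w \<in> T z"
        have zr': "infdist z \<Omega> \<le> r" using zr ds by simp
        show "infdist z \<Omega> \<le> \<kappa> * norm w"
        proof (cases "norm w \<le> r0")
          case True
          then have "infdist z \<Omega> \<le> \<kappa>0 * norm w" using h w by (auto simp: inv_op_def)
          also have "\<dots> \<le> \<kappa> * norm w" by (simp add: \<kappa>_def mult_right_mono)
          finally show ?thesis .
        next
          case False
          have "r = (r / r0) * r0" using r by simp
          also have "\<dots> \<le> (r/r0) * norm w" using False \<open>r > 0\<close> r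
            by (intro mult_left_mono) auto
          also have "\<dots> \<le> \<kappa> * norm w" unfolding \<kappa>_def
            by (intro mult_right_mono) auto
          finally show ?thesis using zr' by simp
        qed
      qed
      then show "\<exists>\<kappa>>0. \<forall>z. dist_set z \<Omega> \<le> ereal r \<longrightarrow> dist_set z \<Omega> \<le> ereal \<kappa> * dist_set 0 (T z)"
        using kp by blast
    qed
  qed
  obtain x0 where x0: "x0 \<in> \<Omega>" using ne by blast
  have 34: "c4" if H3: "c3"
    unfolding c4_def
  proof (intro allI impI)
    fix r :: real assume "r > 0"
    then obtain \<kappa> where k: "\<kappa> > 0" "\<forall>z. dist_set z \<Omega> \<le> ereal (r + norm x0) \<longrightarrow>
                    dist_set z \<Omega> \<le> ereal \<kappa> * dist_set 0 (T z)"
      using H3 unfolding c3_def by (metis add_pos_nonneg norm_ge_zero)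
    have "dist_set z \<Omega> \<le> ereal (r + norm x0)" if "norm z \<le> r" for z
    proof -
      have "infdist z \<Omega> \<le> dist z x0" using infdist_le x0 by blast
      also have "\<dots> \<le> norm z + norm x0" by (simp add: dist_norm norm_triangle_ineq4)
      finally show ?thesis using that ds by simp
    qed
    then show "\<exists>\<kappa>>0. \<forall>z. norm z \<le> r \<longrightarrow> dist_set z \<Omega> \<le> ereal \<kappa> * dist_set 0 (T z)"
      using k by blast
  qed
  have 45: "c5" if H4: "c4"
  proof -
    obtain \<kappa> where k: "\<kappa> > 0" "\<forall>z. norm z \<le> norm x0 + 1 \<longrightarrow>
                    dist_set z \<Omega> \<le> ereal \<kappa> * dist_set 0 (T z)"
      using H4 unfolding c4_def by (metis add_nonneg_pos norm_ge_zero zero_less_one)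
    have "norm z \<le> norm x0 + 1" if "z \<in> cball x0 1" for z
      using that norm_triangle_ineq2[of z x0] by (auto simp: dist_norm norm_minus_commute)
    then show ?thesis unfolding c5_def using x0 k
      by (intro bexI[of _ x0] exI[of _ 1] conjI exI[of _ \<kappa>]) auto
  qed
  show ?thesis using 12 21 23 34 45 by blast
qed

end
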